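(* Let $A$ be a finite set and let $(v_{xy})$ be a Llull matrix on $A$ with CLC structure, and let $\xi$ be any admissible order for it. (1) Suppose $t_{xy}>0$ for all distinct $x,y\in A$, and let $q_{xy}=v_{xy}/t_{xy}$. Then $q_{xy}\ge q_{yx}$ whenever $x<_\xi y$, and $q_{xz}\ge q_{yz}$ and $q_{zx}\le q_{zy}$ whenever $x<_\xi y$ and $z\notin\{x,y\}$. Moreover, the top dominant irreducible component $X$ of $A$ for $(v_{xy})$ is also a top dominant irreducible component of $A$ for $(q_{xy})$, and $q_{xy}>0$ whenever $x\in X$ and $y\neq x$. (2) Suppose $t_{xy}=0$ for some distinct $x,y\in A$. Then there exists $Y\subseteq A$ such that $t_{x\bar x}>0$ for all distinct $x,\bar x\notin Y$, and $v_{yx}=0$ for all $y\in Y$ and all $x\neq y$.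
   Context: A Llull matrix on a finite set $A$ is an assignment to each ordered pair of distinct elements $x\neq y$ of $A$ of a number $v_{xy}\in[0,1]$ such that $v_{xy}+v_{yx}\le 1$. Turnouts: $t_{xy}=v_{xy}+v_{yx}$; margins: $m_{xy}=v_{xy}-v_{yx}$. The matrix has CLC structure if there is a total order $\xi$ on $A$ (an admissible order) such that, writing $x<_\xi y$ when $x$ precedes $y$ and $x'$ for the immediate successor of $x$ in $\xi$ (when it exists): (i) $v_{xy}\ge v_{yx}$ whenever $x<_\xi y$; (ii) $v_{xz}=\max(v_{xy},v_{yz})$ whenever $x<_\xi y<_\xi z$; (iii) $v_{zx}=\min(v_{zy},v_{yx})$ whenever $x<_\xi y<_\xi z$; (iv) $0\le t_{xz}-t_{x'z}\le m_{xx'}$ whenever $x'$ exists and $z\notin\{x,x'\}$. For any Llull matrix $(w_{xy})$: indirect scores $\hat w_{xy}=\max$ over paths $x=x_0,\dots,x_n=y$ of $\min_i w_{x_ix_{i+1}}$; irreducible components are classes of $x\sim y$ iff $x=y$ or ($\hat w_{xy}>0$ and $\hat w_{yx}>0$); $x$ dominates $y$ iff $\hat w_{xy}>0$ and $\hat w_{yx}=0$, which passes to components; a top dominant irreducible component is one dominating every other component. A non-vanishing Llull matrix with CLC structure has a (unique) top dominant irreducible component. *)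

theory Defs
  imports Complex_Main
begin

definition llull :: "'a set \<Rightarrow> ('a \<Rightarrow> 'a \<Rightarrow> real) \<Rightarrow> bool" where
  "llull A v \<longleftrightarrow> (\<forall>x\<in>A. \<forall>y\<in>A. x \<noteq> y \<longrightarrow>
      0 \<le> v x y \<and> v x y \<le> 1 \<and> v x y + v y x \<le> 1)"

definition turnout :: "('a \<Rightarrow> 'a \<Rightarrow> real) \<Rightarrow> 'a \<Rightarrow> 'a \<Rightarrow> real" where
  "turnout v x y = v x y + v y x"

definition margin :: "('a \<Rightarrow> 'a \<Rightarrow> real) \<Rightarrow> 'a \<Rightarrow> 'a \<Rightarrow> real" where
  "margin v x y = v x y - v y x"

text \<open>The order xi is given as a strict total order relation r on A: (x,y) in r means x precedes y.\<close>
definition imm_succ :: "'a rel \<Rightarrow> 'a \<Rightarrow> 'a \<Rightarrow> bool" where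
  "imm_succ r x y \<longleftrightarrow> (x, y) \<in> r \<and> \<not> (\<exists>z. (x, z) \<in> r \<and> (z, y) \<in> r)"

definition admissible_order :: "'a set \<Rightarrow> ('a \<Rightarrow> 'a \<Rightarrow> real) \<Rightarrow> 'a rel \<Rightarrow> bool" where
  "admissible_order A v r \<longleftrightarrow>
     r \<subseteq> A \<times> A \<and> strict_linear_order_on A r \<and>
     (\<forall>x y. (x, y) \<in> r \<longrightarrow> v x y \<ge> v y x) \<and>
     (\<forall>x y z. (x, y) \<in> r \<and> (y, z) \<in> r \<longrightarrow> v x z = max (v x y) (v y z)) \<and>
     (\<forall>x y z. (x, y) \<in> r \<and> (y, z) \<in> r \<longrightarrow> v z x = min (v z y) (v y x)) \<and>
     (\<forall>x x' z. imm_succ r x x' \<and> z \<in> A \<and> z \<noteq> x \<and> z \<noteq> x' \<longrightarrow>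
        0 \<le> turnout v x z - turnout v x' z \<and>
        turnout v x z - turnout v x' z \<le> margin v x x')"

definition has_CLC :: "'a set \<Rightarrow> ('a \<Rightarrow> 'a \<Rightarrow> real) \<Rightarrow> bool" where
  "has_CLC A v \<longleftrightarrow> (\<exists>r. admissible_order A v r)"

definition path_in :: "'a set \<Rightarrow> 'a \<Rightarrow> 'a \<Rightarrow> 'a list \<Rightarrow> bool" where
  "path_in A x y ps \<longleftrightarrow> length ps \<ge> 2 \<and> hd ps = x \<and> last ps = y \<and> set ps \<subseteq> A \<and>
     (\<forall>i. Suc i < length ps \<longrightarrow> ps ! i \<noteq> ps ! Suc i)"

definition path_strength :: "('a \<Rightarrow> 'a \<Rightarrow> real) \<Rightarrow> 'a list \<Rightarrow> real" where
  "path_strength w ps = Min (set (map (\<lambda>(a, b). w a b) (zip ps (tl ps))))"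

definition indirect :: "'a set \<Rightarrow> ('a \<Rightarrow> 'a \<Rightarrow> real) \<Rightarrow> 'a \<Rightarrow> 'a \<Rightarrow> real" where
  "indirect A w x y = Max {path_strength w ps | ps. path_in A x y ps}"

definition irr_rel :: "'a set \<Rightarrow> ('a \<Rightarrow> 'a \<Rightarrow> real) \<Rightarrow> 'a rel" where
  "irr_rel A w = {(x, y). x \<in> A \<and> y \<in> A \<and>
      (x = y \<or> (indirect A w x y > 0 \<and> indirect A w y x > 0))}"

definition irr_components :: "'a set \<Rightarrow> ('a \<Rightarrow> 'a \<Rightarrow> real) \<Rightarrow> 'a set set" where
  "irr_components A w = A // irr_rel A w"

definition dominates :: "'a set \<Rightarrow> ('a \<Rightarrow> 'a \<Rightarrow> real) \<Rightarrow> 'a \<Rightarrow> 'a \<Rightarrow> bool" where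
  "dominates A w x y \<longleftrightarrow> indirect A w x y > 0 \<and> indirect A w y x = 0"

definition comp_dominates :: "'a set \<Rightarrow> ('a \<Rightarrow> 'a \<Rightarrow> real) \<Rightarrow> 'a set \<Rightarrow> 'a set \<Rightarrow> bool" where
  "comp_dominates A w C D \<longleftrightarrow> (\<forall>x\<in>C. \<forall>y\<in>D. dominates A w x y)"

definition top_dominant :: "'a set \<Rightarrow> ('a \<Rightarrow> 'a \<Rightarrow> real) \<Rightarrow> 'a set \<Rightarrow> bool" where
  "top_dominant A w X \<longleftrightarrow> X \<in> irr_components A w \<and>
     (\<forall>D \<in> irr_components A w. D \<noteq> X \<longrightarrow> comp_dominates A w X D)"

end

theory Submission
  imports Defs
begin


lemma path_link_mem:
  assumes "path_in A x y ps" "Suc i < length ps"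
  shows "(ps!i, ps!Suc i) \<in> set (zip ps (tl ps))"
  using assms unfolding in_set_zip by (intro exI[of _ i]) (auto simp: nth_tl path_in_def)

lemma path_link_props:
  assumes "path_in A x y ps" "(a,b) \<in> set (zip ps (tl ps))"
  shows "a \<in> A \<and> b \<in> A \<and> a \<noteq> b"
proof -
  obtain i where i: "ps ! i = a" "tl ps ! i = b" "i < length ps" "i < length (tl ps)"
    using assms(2) unfolding in_set_zip by auto
  have "b = ps ! Suc i" using i by (simp add: nth_tl)
  moreover have "Suc i < length ps" using i by simp
  ultimately show ?thesis using assms(1) i unfolding path_in_def
    by (metis nth_mem subsetD)
qed

lemma path_links_ne:
  assumes "path_in A x y ps"
  shows "set (zip ps (tl ps)) \<noteq> {}"
  using path_link_mem[OF assms, of 0] assms by (auto simp: path_in_def)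

lemma strength_eq:
  "path_strength w ps = Min ((\<lambda>(a,b). w a b) ` set (zip ps (tl ps)))"
  unfolding path_strength_def by simp

lemma strength_in:
  assumes "path_in A x y ps"
  shows "\<exists>a\<in>A. \<exists>b\<in>A. a \<noteq> b \<and> path_strength w ps = w a b"
proof -
  have "path_strength w ps \<in> (\<lambda>(a,b). w a b) ` set (zip ps (tl ps))"
    unfolding strength_eq using path_links_ne[OF assms] by (intro Min_in) auto
  then show ?thesis using path_link_props[OF assms] by fastforce
qed

lemma strength_pos_iff:
  assumes "path_in A x y ps"
  shows "path_strength w ps > 0 \<longleftrightarrow> (\<forall>(a,b)\<in>set (zip ps (tl ps)). w a b > 0)"
  unfolding strength_eq using path_links_ne[OF assms] by (subst Min_gr_iff) auto

lemma strength_le_idx: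
  assumes "path_in A x y ps" "Suc i < length ps"
  shows "path_strength w ps \<le> w (ps!i) (ps!Suc i)"
  unfolding strength_eq using path_link_mem[OF assms] by (intro Min_le) force+

lemma strength_nonneg:
  assumes "path_in A x y ps" "\<forall>a\<in>A. \<forall>b\<in>A. a \<noteq> b \<longrightarrow> w a b \<ge> 0"
  shows "path_strength w ps \<ge> 0"
  using strength_in[OF assms(1), of w] assms(2) by auto

lemma paths_finite:
  assumes "finite A"
  shows "finite {path_strength w ps | ps. path_in A x y ps}"
proof (rule finite_subset)
  show "{path_strength w ps | ps. path_in A x y ps} \<subseteq> (\<lambda>(a,b). w a b) ` (A \<times> A)"
  proof
    fix t assume "t \<in> {path_strength w ps | ps. path_in A x y ps}"
    then obtain ps where "path_in A x y ps" "t = path_strength w ps" by blast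
    then obtain a b where "a \<in> A" "b \<in> A" "t = w a b" using strength_in by metis
    then show "t \<in> (\<lambda>(a,b). w a b) ` (A \<times> A)" by force
  qed
  show "finite ((\<lambda>(a,b). w a b) ` (A \<times> A))" using assms by simp
qed

lemma indirect_ge:
  assumes "finite A" "path_in A x y ps"
  shows "path_strength w ps \<le> indirect A w x y"
  unfolding indirect_def using paths_finite[OF assms(1)] assms(2) by (intro Max_ge) auto

lemma indirect_pos_iff:
  assumes "finite A" "\<exists>ps. path_in A x y ps"
  shows "indirect A w x y > 0 \<longleftrightarrow> (\<exists>ps. path_in A x y ps \<and> path_strength w ps > 0)"
  unfolding indirect_def using paths_finite[OF assms(1)] assms(2) by (subst Max_gr_iff) auto

lemma indirect_nonneg:
  assumes "finite A" "path_in A x y ps" "\<forall>a\<in>A. \<forall>b\<in>A. a \<noteq> b \<longrightarrow> w a b \<ge> 0"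
  shows "indirect A w x y \<ge> 0"
  using indirect_ge[OF assms(1,2), of w] strength_nonneg[OF assms(2,3)] by linarith

lemma two_path:
  assumes "a \<in> A" "b \<in> A" "a \<noteq> b"
  shows "path_in A a b [a,b]" "path_strength w [a,b] = w a b"
  using assms by (auto simp: path_in_def path_strength_def nth_Cons split: nat.splits)

lemma indirect_equiv:
  assumes "finite A"
    and pos: "\<forall>a\<in>A. \<forall>b\<in>A. a \<noteq> b \<longrightarrow> (w1 a b > 0 \<longleftrightarrow> w2 a b > 0)"
    and n1: "\<forall>a\<in>A. \<forall>b\<in>A. a \<noteq> b \<longrightarrow> w1 a b \<ge> 0"
    and n2: "\<forall>a\<in>A. \<forall>b\<in>A. a \<noteq> b \<longrightarrow> w2 a b \<ge> 0"
  shows "(indirect A w1 x y > 0 \<longleftrightarrow> indirect A w2 x y > 0) \<and>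
         (indirect A w1 x y = 0 \<longleftrightarrow> indirect A w2 x y = 0)"
proof (cases "\<exists>ps. path_in A x y ps")
  case True
  then obtain ps where ps: "path_in A x y ps" by blast
  have sp: "path_strength w1 qs > 0 \<longleftrightarrow> path_strength w2 qs > 0" if "path_in A x y qs" for qs
    using strength_pos_iff[OF that] path_link_props[OF that] pos by fastforce
  have e: "indirect A w1 x y > 0 \<longleftrightarrow> indirect A w2 x y > 0"
    using indirect_pos_iff[OF assms(1) True] sp by blast
  moreover have "indirect A w1 x y \<ge> 0" "indirect A w2 x y \<ge> 0"
    using indirect_nonneg[OF assms(1) ps] n1 n2 by auto
  ultimately show ?thesis by linarith
next
  case False
  then have "{path_strength w1 ps | ps. path_in A x y ps} = {path_strength w2 ps | ps. path_in A x y ps}"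
    by auto
  then have "indirect A w1 x y = indirect A w2 x y" unfolding indirect_def by simp
  then show ?thesis by simp
qed

lemma crossing:
  "ps \<noteq> [] \<Longrightarrow> hd ps \<in> U \<Longrightarrow> last ps \<notin> U \<Longrightarrow>
   \<exists>i. Suc i < length ps \<and> ps!i \<in> U \<and> ps!Suc i \<notin> U"
proof (induction ps)
  case Nil then show ?case by simp
next
  case (Cons a ps)
  show ?case
  proof (cases "ps = []")
    case True then show ?thesis using Cons by simp
  next
    case False
    show ?thesis
    proof (cases "hd ps \<in> U")
      case True
      then obtain i where "Suc i < length ps" "ps!i \<in> U" "ps!Suc i \<notin> U"
        using Cons False by auto
      then show ?thesis by (intro exI[of _ "Suc i"]) auto
    next
      case f: False
      then show ?thesis using Cons False by (intro exI[of _ 0]) (auto simp: hd_conv_nth)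
    qed
  qed
qed



context
  fixes A :: "'a set" and v :: "'a \<Rightarrow> 'a \<Rightarrow> real" and r :: "'a rel"
  assumes fin: "finite A" and ll: "llull A v" and ad: "admissible_order A v r"
begin

lemma rA: "(x,y) \<in> r \<Longrightarrow> x \<in> A \<and> y \<in> A"
  using ad unfolding admissible_order_def by auto
lemma irr: "(x,x) \<notin> r"
  using ad unfolding admissible_order_def strict_linear_order_on_def irrefl_def by auto
lemma tr: "(x,y) \<in> r \<Longrightarrow> (y,z) \<in> r \<Longrightarrow> (x,z) \<in> r"
  using ad unfolding admissible_order_def strict_linear_order_on_def trans_def by blast
lemma tot: "x \<in> A \<Longrightarrow> y \<in> A \<Longrightarrow> x \<noteq> y \<Longrightarrow> (x,y) \<in> r \<or> (y,x) \<in> r"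
  using ad unfolding admissible_order_def strict_linear_order_on_def total_on_def by blast
lemma fwd: "(x,y) \<in> r \<Longrightarrow> v y x \<le> v x y"
  using ad unfolding admissible_order_def by blast
lemma mx: "(x,y) \<in> r \<Longrightarrow> (y,z) \<in> r \<Longrightarrow> v x z = max (v x y) (v y z)"
  using ad unfolding admissible_order_def by blast
lemma mn: "(x,y) \<in> r \<Longrightarrow> (y,z) \<in> r \<Longrightarrow> v z x = min (v z y) (v y x)"
  using ad unfolding admissible_order_def by blast
lemma iv: "imm_succ r x x' \<Longrightarrow> z \<in> A \<Longrightarrow> z \<noteq> x \<Longrightarrow> z \<noteq> x' \<Longrightarrow>
   turnout v x' z \<le> turnout v x z"
proof -
  assume "imm_succ r x x'" "z \<in> A" "z \<noteq> x" "z \<noteq> x'"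
  then have "0 \<le> turnout v x z - turnout v x' z"
    using ad unfolding admissible_order_def by blast
  then show ?thesis by simp
qed
lemma iv2: "imm_succ r x x' \<Longrightarrow> z \<in> A \<Longrightarrow> z \<noteq> x \<Longrightarrow> z \<noteq> x' \<Longrightarrow>
   turnout v x z - turnout v x' z \<le> margin v x x'"
  using ad unfolding admissible_order_def by blast
lemma nn: "x \<in> A \<Longrightarrow> y \<in> A \<Longrightarrow> x \<noteq> y \<Longrightarrow> 0 \<le> v x y"
  using ll unfolding llull_def by blast
lemma nnr: "(x,y) \<in> r \<Longrightarrow> 0 \<le> v x y" "(x,y) \<in> r \<Longrightarrow> 0 \<le> v y x"
proof -
  assume h: "(x,y) \<in> r"
  then have "x \<noteq> y" using irr by blast
  then show "0 \<le> v x y" using nn rA[OF h] by blast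
next
  assume h: "(x,y) \<in> r"
  then have "x \<noteq> y" using irr by blast
  then show "0 \<le> v y x" using nn rA[OF h] by blast
qed

lemma finr: "finite r"
proof -
  have "r \<subseteq> A \<times> A" using ad unfolding admissible_order_def by blast
  then show ?thesis using finite_subset fin by blast
qed
lemma acy: "acyclic r"
proof -
  have "trans r" using tr unfolding trans_def by blast
  then have "r\<^sup>+ = r" by simp
  then show ?thesis unfolding acyclic_irrefl irrefl_def using irr by simp
qed
lemma wfr: "wf r" using finite_acyclic_wf[OF finr acy] .
lemma wfc: "wf (r\<inverse>)" using finite_acyclic_wf_converse[OF finr acy] .

lemma succ_ex:
  assumes "(x,d) \<in> r"
  shows "\<exists>x'. imm_succ r x x' \<and> (x' = d \<or> (x',d) \<in> r)"
proof -
  let ?B = "{y. (x,y) \<in> r \<and> (y = d \<or> (y,d) \<in> r)}"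
  have "d \<in> ?B" using assms by simp
  then obtain m where m: "m \<in> ?B" "\<And>y. (y,m) \<in> r \<Longrightarrow> y \<notin> ?B"
    using wfr[unfolded wf_eq_minimal, rule_format, of _ ?B] by blast
  have "imm_succ r x m" unfolding imm_succ_def
  proof safe
    show "(x,m) \<in> r" using m by simp
    fix z assume z: "(x,z) \<in> r" "(z,m) \<in> r"
    have "m = d \<or> (m,d) \<in> r" using m(1) by simp
    then have "z = d \<or> (z,d) \<in> r" using z(2) tr by blast
    then have "z \<in> ?B" using z(1) by simp
    then show False using m(2)[OF z(2)] by blast
  qed
  then show ?thesis using m by blast
qed

lemma pred_ex:
  assumes "(c,d) \<in> r"
  shows "\<exists>p. imm_succ r p d \<and> (p = c \<or> (c,p) \<in> r)"
proof -
  let ?B = "{y. (y,d) \<in> r \<and> (y = c \<or> (c,y) \<in> r)}"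
  have "c \<in> ?B" using assms by simp
  then obtain m where m: "m \<in> ?B" "\<And>y. (y,m) \<in> r\<inverse> \<Longrightarrow> y \<notin> ?B"
    using wfc[unfolded wf_eq_minimal, rule_format, of _ ?B] by blast
  have "imm_succ r m d" unfolding imm_succ_def
  proof safe
    show "(m,d) \<in> r" using m by simp
    fix z assume z: "(m,z) \<in> r" "(z,d) \<in> r"
    have "m = c \<or> (c,m) \<in> r" using m(1) by simp
    then have "z = c \<or> (c,z) \<in> r" using z(1) tr by blast
    then have "z \<in> ?B" using z(2) by simp
    have "(z,m) \<in> r\<inverse>" using z(1) by simp
    then show False using m(2) \<open>z \<in> ?B\<close> by blast
  qed
  then show ?thesis using m by blast
qed

lemma imm_r: "imm_succ r x y \<Longrightarrow> (x,y) \<in> r" unfolding imm_succ_def by blast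

lemma step_b:
  assumes "imm_succ r c c'" "imm_succ r c' c''" "v c c' = 0"
  shows "v c' c'' = 0"
proof -
  have r1: "(c,c') \<in> r" and r2: "(c',c'') \<in> r" using assms imm_r by auto
  have r3: "(c,c'') \<in> r" using tr r1 r2 by blast
  have "v c' c \<le> 0" using fwd[OF r1] assms(3) by simp
  then have z1: "v c' c = 0" using nnr(2)[OF r1] by simp
  have "c \<noteq> c'" "c \<noteq> c''" using r1 r3 irr by auto
  then have "turnout v c'' c \<le> turnout v c' c"
    using iv[OF assms(2)] rA[OF r1] by blast
  moreover have "turnout v c' c = 0" using z1 assms(3) by (simp add: turnout_def)
  moreover have "v c c'' = v c' c''" using mx[OF r1 r2] assms(3) nnr(1)[OF r2] by simp
  ultimately have "v c'' c + v c' c'' \<le> 0" by (simp add: turnout_def)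
  then show ?thesis using nnr(1)[OF r2] nnr(2)[OF r3] by simp
qed

lemma part2:
  assumes "\<exists>x\<in>A. \<exists>y\<in>A. x \<noteq> y \<and> turnout v x y = 0"
  shows "\<exists>Y\<subseteq>A. (\<forall>x\<in>A - Y. \<forall>x'\<in>A - Y. x \<noteq> x' \<longrightarrow> turnout v x x' > 0) \<and>
                    (\<forall>y\<in>Y. \<forall>x\<in>A. x \<noteq> y \<longrightarrow> v y x = 0)"
proof -
  let ?Z = "{c. \<exists>d. (c,d) \<in> r \<and> v c d = 0}"
  obtain x y where xy: "x \<in> A" "y \<in> A" "x \<noteq> y" "turnout v x y = 0" using assms by blast
  have "v x y = 0" "v y x = 0" using xy nn[of x y] nn[of y x] by (auto simp: turnout_def)
  then have "?Z \<noteq> {}" using tot[OF xy(1-3)] by blast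
  then obtain z0 where "z0 \<in> ?Z" by blast
  then obtain a0 where a0: "a0 \<in> ?Z" "\<And>y. (y,a0) \<in> r \<Longrightarrow> y \<notin> ?Z"
    using wfr[unfolded wf_eq_minimal, rule_format, of _ ?Z] by blast
  obtain d0 where d0: "(a0,d0) \<in> r" "v a0 d0 = 0" using a0 by blast
  have a0A: "a0 \<in> A" using rA d0 by blast
  define Y where "Y = {c \<in> A. c = a0 \<or> (a0,c) \<in> r}"
  have P: "\<forall>c'. imm_succ r c c' \<longrightarrow> v c c' = 0" if "c = a0 \<or> (a0,c) \<in> r" for c
    using that
  proof (induction c rule: wf_induct_rule[OF wfr])
    case (1 c)
    show ?case
    proof (cases "c = a0")
      case True
      show ?thesis
      proof (intro allI impI)
        fix c' assume s: "imm_succ r c c'"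
        show "v c c' = 0"
        proof (cases "c' = d0")
          case True then show ?thesis using d0 \<open>c = a0\<close> by simp
        next
          case False
          have "(c',d0) \<in> r"
          proof -
            have "(c,c') \<in> r" using s imm_r by blast
            then have "c' \<in> A" using rA by blast
            moreover have "d0 \<in> A" using rA d0 by blast
            ultimately have "(c',d0) \<in> r \<or> (d0,c') \<in> r" using tot False by blast
            then show ?thesis using s d0 True unfolding imm_succ_def by blast
          qed
          have cc': "(c,c') \<in> r" using s imm_r by blast
          then have "v a0 d0 = max (v c c') (v c' d0)" using mx \<open>(c',d0) \<in> r\<close> True by blast
          moreover have "0 \<le> v c c'" using nnr(1)[OF cc'] .
          ultimately show ?thesis using d0 by linarith
        qed
      qed
    next
      case False
      then have "(a0,c) \<in> r" using 1 by blast
      then obtain p where p: "imm_succ r p c" "p = a0 \<or> (a0,p) \<in> r" using pred_ex by blast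
      have "v p c = 0" using 1 p imm_r by blast
      then show ?thesis using step_b p by blast
    qed
  qed
  have E: "\<forall>c. (c = a0 \<or> (a0,c) \<in> r) \<longrightarrow> (c,d) \<in> r \<longrightarrow> v c d = 0" for d
  proof (induction d rule: wf_induct_rule[OF wfr])
    case (1 d)
    show ?case
    proof (intro allI impI)
      fix c assume c: "c = a0 \<or> (a0,c) \<in> r" and cd: "(c,d) \<in> r"
      obtain p where p: "imm_succ r p d" "p = c \<or> (c,p) \<in> r" using pred_ex[OF cd] by blast
      show "v c d = 0"
      proof (cases "p = c")
        case True then show ?thesis using P c p by blast
      next
        case False
        then have cp: "(c,p) \<in> r" using p by blast
        have "v c p = 0" using 1 p imm_r c cp by blast
        moreover have "v p d = 0" using P[of p] p c cp tr by blast
        ultimately show ?thesis using mx[OF cp imm_r[OF p(1)]] by simp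
      qed
    qed
  qed
  obtain a1 where a1: "imm_succ r a0 a1" using succ_ex d0 by blast
  have ra1: "(a0,a1) \<in> r" using a1 imm_r by blast
  have va01: "v a0 a1 = 0" using E ra1 by blast
  have va10: "v a1 a0 = 0" using fwd[OF ra1] va01 nnr(2)[OF ra1] by simp
  have below_a0: "v a0 x = 0" if "(x,a0) \<in> r" for x
  proof -
    have xa1: "(x,a1) \<in> r" using tr that ra1 by blast
    have xn: "x \<noteq> a0" "x \<noteq> a1" "x \<in> A" using that xa1 irr rA by auto
    have "turnout v a1 x \<le> turnout v a0 x" using iv[OF a1 xn(3,1,2)] .
    moreover have "v a1 x = 0" using mn[OF that ra1] va10 nnr(2)[OF that] by simp
    moreover have "v x a1 = v x a0" using mx[OF that ra1] va01 nnr(1)[OF that] by simp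
    moreover have "v a0 x \<ge> 0" using nnr(2)[OF that] .
    moreover have "turnout v a0 x \<le> turnout v a1 x"
    proof -
      have "turnout v a0 x - turnout v a1 x \<le> margin v a0 a1"
        using iv2[OF a1 xn(3,1,2)] .
      then show ?thesis using va01 va10 by (simp add: margin_def)
    qed
    ultimately show ?thesis by (simp add: turnout_def)
  qed
  show ?thesis
  proof (intro exI[of _ Y] conjI ballI impI)
    show "Y \<subseteq> A" unfolding Y_def by blast
  next
    fix c d assume c: "c \<in> A - Y" and d: "d \<in> A - Y" and cd: "c \<noteq> d"
    have ca: "(c,a0) \<in> r" "(d,a0) \<in> r" using c d tot a0A unfolding Y_def by auto
    have "turnout v c d \<noteq> 0"
    proof
      assume t0: "turnout v c d = 0"
      have "v c d = 0" "v d c = 0" using t0 nn[of c d] nn[of d c] c d cd by (auto simp: turnout_def)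
      then show False using tot[of c d] c d cd a0(2) ca by blast
    qed
    moreover have "turnout v c d \<ge> 0" using nn[of c d] nn[of d c] c d cd by (auto simp: turnout_def)
    ultimately show "turnout v c d > 0" by simp
  next
    fix y x assume y: "y \<in> Y" and x: "x \<in> A" and xy: "x \<noteq> y"
    have yy: "y = a0 \<or> (a0,y) \<in> r" "y \<in> A" using y unfolding Y_def by auto
    show "v y x = 0"
    proof (cases "(y,x) \<in> r")
      case True then show ?thesis using E yy by blast
    next
      case False
      then have yx: "(x,y) \<in> r" using tot x yy xy by blast
      show ?thesis
      proof (cases "x = a0 \<or> (a0,x) \<in> r")
        case True
        then have "v x y = 0" using E yx by blast
        then show ?thesis using fwd[OF yx] nnr(2)[OF yx] by simp
      next
        case xa: False
        then have xa0: "(x,a0) \<in> r" using tot x a0A by blast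
        show ?thesis
        proof (cases "y = a0")
          case True then show ?thesis using below_a0 xa0 by simp
        next
          case False
          then have a0y: "(a0,y) \<in> r" using yy by blast
          have "v y a0 = 0" using E a0y fwd[OF a0y] nnr(2)[OF a0y] by force
          then show ?thesis using mn[OF xa0 a0y] nnr(2)[OF yx] by simp
        qed
      qed
    qed
  qed
qed


lemma frac_mono:
  fixes a b a' b' :: real
  assumes "0 \<le> a'" "a' \<le> a" "0 \<le> b" "b \<le> b'" "a + b > 0" "a' + b' > 0"
  shows "a' / (a' + b') \<le> a / (a + b) \<and> b / (a + b) \<le> b' / (a' + b')"
proof -
  have "a' * (a + b) \<le> a * (a' + b')"
  proof -
    have "a' * b \<le> a * b'" using assms by (meson mult_mono order_trans)
    then show ?thesis by (simp add: algebra_simps)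
  qed
  moreover have "b * (a' + b') \<le> b' * (a + b)"
  proof -
    have "a' * b \<le> a * b'" using assms by (meson mult_mono order_trans)
    then show ?thesis by (simp add: algebra_simps)
  qed
  ultimately show ?thesis using assms by (simp add: divide_simps)
qed

lemma frac_half:
  fixes a b a' b' :: real
  assumes "0 \<le> b" "b \<le> a" "0 \<le> a'" "a' \<le> b'" "a + b > 0" "a' + b' > 0"
  shows "a' / (a' + b') \<le> a / (a + b) \<and> b / (a + b) \<le> b' / (a' + b')"
proof -
  have "a' * b \<le> b' * b" using assms by (simp add: mult_right_mono)
  also have "\<dots> \<le> b' * a" using assms by (simp add: mult_left_mono)
  finally have k: "a' * b \<le> a * b'" by (simp add: mult.commute)
  have "a' * (a + b) \<le> a * (a' + b')" "b * (a' + b') \<le> b' * (a + b)"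
    using k by (simp_all add: algebra_simps)
  then show ?thesis using assms by (simp add: divide_simps)
qed

lemma part1:
  assumes tp: "\<forall>x\<in>A. \<forall>y\<in>A. x \<noteq> y \<longrightarrow> turnout v x y > 0"
  shows "let q = (\<lambda>x y. v x y / turnout v x y) in
             (\<forall>x y. (x, y) \<in> r \<longrightarrow> q x y \<ge> q y x) \<and>
             (\<forall>x y z. (x, y) \<in> r \<and> z \<in> A \<and> z \<noteq> x \<and> z \<noteq> y \<longrightarrow>
                q x z \<ge> q y z \<and> q z x \<le> q z y) \<and>
             (\<forall>X. top_dominant A v X \<longrightarrow>
                top_dominant A q X \<and> (\<forall>x\<in>X. \<forall>y\<in>A. y \<noteq> x \<longrightarrow> q x y > 0))"
proof -
  define q where "q = (\<lambda>x y. v x y / turnout v x y)"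
  have tsym: "turnout v a b = turnout v b a" for a b by (simp add: turnout_def)
  have tpr: "turnout v x y > 0" if "(x,y) \<in> r" for x y
  proof -
    have "x \<noteq> y" using irr that by blast
    then show ?thesis using tp rA[OF that] by blast
  qed
  have fpos: "v x y > 0" if "(x,y) \<in> r" for x y
    using tpr[OF that] fwd[OF that] by (simp add: turnout_def)
  have C1: "q x y \<ge> q y x" if "(x,y) \<in> r" for x y
    unfolding q_def using tsym[of y x] fwd[OF that] tpr[OF that]
    by (simp add: divide_right_mono)
  have C2: "q x z \<ge> q y z \<and> q z x \<le> q z y"
    if xy: "(x,y) \<in> r" and z: "z \<in> A" "z \<noteq> x" "z \<noteq> y" for x y z
  proof -
    have xA: "x \<in> A" "y \<in> A" using rA xy by auto
    have t1: "v x z + v z x > 0" using tp xA z unfolding turnout_def by auto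
    have t2: "v y z + v z y > 0" using tp xA z unfolding turnout_def by auto
    have nns: "0 \<le> v x z" "0 \<le> v z x" "0 \<le> v y z" "0 \<le> v z y"
      using nn xA z by auto
    have key: "v y z / (v y z + v z y) \<le> v x z / (v x z + v z x) \<and>
               v z x / (v x z + v z x) \<le> v z y / (v y z + v z y)"
    proof (cases "(z,x) \<in> r")
      case True
      have "v z y = max (v z x) (v x y)" using mx[OF True xy] .
      moreover have "v y z = min (v y x) (v x z)" using mn[OF True xy] .
      ultimately show ?thesis using frac_mono[of "v y z" "v x z" "v z x" "v z y"] nns t1 t2 by simp
    next
      case False
      then have xz: "(x,z) \<in> r" using tot xA z by blast
      show ?thesis
      proof (cases "(y,z) \<in> r")
        case True
        have "v x z = max (v x y) (v y z)" using mx[OF xy True] .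
        moreover have "v z x = min (v z y) (v y x)" using mn[OF xy True] .
        ultimately show ?thesis using frac_mono[of "v y z" "v x z" "v z x" "v z y"] nns t1 t2 by simp
      next
        case False
        then have zy: "(z,y) \<in> r" using tot xA z by blast
        show ?thesis using frac_half[of "v z x" "v x z" "v y z" "v z y"] fwd[OF xz] fwd[OF zy] nns t1 t2
          by simp
      qed
    qed
    then show ?thesis unfolding q_def turnout_def by (simp add: add.commute)
  qed
  have qpos: "q a b > 0 \<longleftrightarrow> v a b > 0" if "a \<in> A" "b \<in> A" "a \<noteq> b" for a b
  proof -
    have "turnout v a b > 0" using tp that by blast
    then show ?thesis unfolding q_def by (simp add: zero_less_divide_iff)
  qed
  have vnn: "\<forall>a\<in>A. \<forall>b\<in>A. a \<noteq> b \<longrightarrow> v a b \<ge> 0" using nn by blast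
  have qnn: "\<forall>a\<in>A. \<forall>b\<in>A. a \<noteq> b \<longrightarrow> q a b \<ge> 0"
    using nn tp unfolding q_def by (simp add: less_imp_le)
  have eqv: "(indirect A q a b > 0 \<longleftrightarrow> indirect A v a b > 0) \<and>
             (indirect A q a b = 0 \<longleftrightarrow> indirect A v a b = 0)" for a b
    using indirect_equiv[OF fin _ qnn vnn] qpos by blast
  have irr_eq: "irr_rel A q = irr_rel A v" unfolding irr_rel_def using eqv by auto
  have dom_eq: "dominates A q a b \<longleftrightarrow> dominates A v a b" for a b
    unfolding dominates_def using eqv by blast
  have td_eq: "top_dominant A q X \<longleftrightarrow> top_dominant A v X" for X
    unfolding top_dominant_def irr_components_def comp_dominates_def irr_eq dom_eq ..
  have C3: "v x y > 0" if X: "top_dominant A v X" and x: "x \<in> X" and y: "y \<in> A" "y \<noteq> x" for X x y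
  proof -
    let ?R = "irr_rel A v"
    have XC: "X \<in> A // ?R" using X unfolding top_dominant_def irr_components_def by blast
    then obtain a where a: "a \<in> A" "X = ?R `` {a}" by (rule quotientE)
    have xA: "x \<in> A" and ax: "(a,x) \<in> ?R" using a x unfolding irr_rel_def by auto
    show ?thesis
    proof (cases "(x,y) \<in> r")
      case True then show ?thesis using fpos by blast
    next
      case False
      then have yx: "(y,x) \<in> r" using tot xA y by blast
      show ?thesis
      proof (rule ccontr)
        assume "\<not> v x y > 0"
        moreover have "0 \<le> v x y" using nn[OF xA y(1)] y(2) by blast
        ultimately have vxy: "v x y = 0" by linarith
        define U where "U = {u \<in> A. (y,u) \<in> r \<and> v u y = 0}"
        have xU: "x \<in> U" using xA yx vxy unfolding U_def by simp
        have yU: "y \<notin> U" using irr unfolding U_def by blast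
        have cut: "v u l = 0" if u: "u \<in> U" and l: "l \<in> A" "l \<notin> U" for u l
        proof -
          have uA: "u \<in> A" "(y,u) \<in> r" "v u y = 0" using u unfolding U_def by auto
          have ul: "u \<noteq> l" using u l by blast
          show ?thesis
          proof (cases "l = y")
            case True then show ?thesis using uA by simp
          next
            case ly: False
            show ?thesis
            proof (cases "(y,l) \<in> r")
              case False
              then have lyr: "(l,y) \<in> r" using tot l ly y by blast
              then show ?thesis using mn[OF lyr uA(2)] uA(3) nnr(2)[OF lyr] by simp
            next
              case True
              then have "v l y \<noteq> 0" using l unfolding U_def by blast
              then have vly: "v l y > 0" using nnr(2)[OF True] by simp
              show ?thesis
              proof (cases "(l,u) \<in> r")
                case True
                have "v u y = min (v u l) (v l y)" using mn[OF \<open>(y,l) \<in> r\<close> True] .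
                then show ?thesis using uA(3) vly nn[of u l] uA l ul by (auto simp: min_def split: if_splits)
              next
                case False
                then have lu: "(u,l) \<in> r" using tot uA l ul by blast
                have "v l y = min (v l u) (v u y)" using mn[OF uA(2) lu] .
                then show ?thesis using uA(3) vly by (simp add: min_def split: if_splits)
              qed
            qed
          qed
        qed
        have nopos: "\<not> indirect A v u l > 0" if u: "u \<in> U" and l: "l \<in> A" "l \<notin> U" for u l
        proof
          assume pos: "indirect A v u l > 0"
          have uA: "u \<in> A" using u unfolding U_def by blast
          have "u \<noteq> l" using u l by blast
          then have "path_in A u l [u,l]" using two_path(1)[OF uA l(1)] by simp
          then have ex: "\<exists>ps. path_in A u l ps" by (rule exI)
          obtain ps where ps: "path_in A u l ps" "path_strength v ps > 0"
            using iffD1[OF indirect_pos_iff[OF fin ex] pos] by (elim exE conjE)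
          have "ps \<noteq> []" "hd ps \<in> U" "last ps \<notin> U" using ps(1) u l unfolding path_in_def by auto
          then have "\<exists>i. Suc i < length ps \<and> ps!i \<in> U \<and> ps!Suc i \<notin> U"
            by (rule crossing)
          then obtain i where i: "Suc i < length ps" "ps!i \<in> U" "ps!Suc i \<notin> U"
            by (elim exE conjE)
          have "set ps \<subseteq> A" using ps(1) unfolding path_in_def by simp
          then have "ps!Suc i \<in> A" using nth_mem[OF i(1)] by (rule subsetD)
          then have "v (ps!i) (ps!Suc i) = 0" using cut[OF i(2) _ i(3)] by simp
          then show False using strength_le_idx[OF ps(1) i(1), of v] ps(2) by simp
        qed
        show False
        proof (cases "a \<in> U")
          case False
          then have "a \<noteq> x" using xU by blast
          then have "indirect A v x a > 0" using ax unfolding irr_rel_def by blast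
          then show False using nopos[OF xU a(1) False] by blast
        next
          case True
          let ?D = "?R `` {y}"
          have DC: "?D \<in> A // ?R" using y by (simp add: quotientI)
          have yD: "y \<in> ?D" using y unfolding irr_rel_def by simp
          have aX: "a \<in> X" using a unfolding irr_rel_def by simp
          have DX: "?D \<noteq> X"
          proof
            assume "?D = X"
            then have "(a,y) \<in> ?R" using yD a by blast
            moreover have "a \<noteq> y" using True yU by blast
            ultimately have "indirect A v a y > 0" unfolding irr_rel_def by blast
            then show False using nopos[OF True y(1) yU] by blast
          qed
          have tdX: "\<forall>D \<in> A // ?R. D \<noteq> X \<longrightarrow> comp_dominates A v X D"
            using X unfolding top_dominant_def irr_components_def by blast
          have "comp_dominates A v X ?D" using tdX[rule_format, OF DC DX] .
          then have "dominates A v a y" using aX yD unfolding comp_dominates_def by blast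
          then have iya: "indirect A v y a = 0" unfolding dominates_def by blast
          have ya: "(y,a) \<in> r" using True unfolding U_def by blast
          have yaA: "y \<in> A" "a \<in> A" "y \<noteq> a" using rA[OF ya] irr ya by auto
          have "v y a \<le> indirect A v y a"
            using indirect_ge[OF fin two_path(1)[OF yaA], of v] two_path(2)[OF yaA, of v] by simp
          then show False using fpos[OF ya] iya by simp
        qed
      qed
    qed
  qed
  show ?thesis
    unfolding Let_def q_def[symmetric]
  proof (intro conjI allI impI)
    show "q y x \<le> q x y" if "(x,y) \<in> r" for x y using C1 that by blast
    show "q y z \<le> q x z" "q z x \<le> q z y" if "(x, y) \<in> r \<and> z \<in> A \<and> z \<noteq> x \<and> z \<noteq> y" for x y z
      using C2 that by blast+
    fix X assume X: "top_dominant A v X"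
    then show "top_dominant A q X" using td_eq by blast
    show "\<forall>x\<in>X. \<forall>y\<in>A. y \<noteq> x \<longrightarrow> 0 < q x y"
    proof (intro ballI impI)
      fix x y assume x: "x \<in> X" and y: "y \<in> A" "y \<noteq> x"
      have "X \<in> A // irr_rel A v" using X unfolding top_dominant_def irr_components_def by blast
      then obtain a where "X = irr_rel A v `` {a}" by (rule quotientE)
      then have "X \<subseteq> A" unfolding irr_rel_def by auto
      then show "0 < q x y" using qpos C3[OF X x y] x y by blast
    qed
  qed
qed

end

theorem proposition3p6:
  fixes A :: "'a set" and v :: "'a \<Rightarrow> 'a \<Rightarrow> real" and r :: "'a rel"
  assumes "finite A" and "llull A v" and "admissible_order A v r"
  shows "((\<forall>x\<in>A. \<forall>y\<in>A. x \<noteq> y \<longrightarrow> turnout v x y > 0) \<longrightarrow>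
           (let q = (\<lambda>x y. v x y / turnout v x y) in
             (\<forall>x y. (x, y) \<in> r \<longrightarrow> q x y \<ge> q y x) \<and>
             (\<forall>x y z. (x, y) \<in> r \<and> z \<in> A \<and> z \<noteq> x \<and> z \<noteq> y \<longrightarrow>
                q x z \<ge> q y z \<and> q z x \<le> q z y) \<and>
             (\<forall>X. top_dominant A v X \<longrightarrow>
                top_dominant A q X \<and> (\<forall>x\<in>X. \<forall>y\<in>A. y \<noteq> x \<longrightarrow> q x y > 0))))
       \<and> ((\<exists>x\<in>A. \<exists>y\<in>A. x \<noteq> y \<and> turnout v x y = 0) \<longrightarrow>
           (\<exists>Y\<subseteq>A. (\<forall>x\<in>A - Y. \<forall>x'\<in>A - Y. x \<noteq> x' \<longrightarrow> turnout v x x' > 0) \<and>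
                    (\<forall>y\<in>Y. \<forall>x\<in>A. x \<noteq> y \<longrightarrow> v y x = 0)))"
proof (intro conjI impI)
  assume h: "\<forall>x\<in>A. \<forall>y\<in>A. x \<noteq> y \<longrightarrow> turnout v x y > 0"
  show "let q = (\<lambda>x y. v x y / turnout v x y) in
             (\<forall>x y. (x, y) \<in> r \<longrightarrow> q x y \<ge> q y x) \<and>
             (\<forall>x y z. (x, y) \<in> r \<and> z \<in> A \<and> z \<noteq> x \<and> z \<noteq> y \<longrightarrow>
                q x z \<ge> q y z \<and> q z x \<le> q z y) \<and>
             (\<forall>X. top_dominant A v X \<longrightarrow>
                top_dominant A q X \<and> (\<forall>x\<in>X. \<forall>y\<in>A. y \<noteq> x \<longrightarrow> q x y > 0))"
    by (rule part1[OF assms h])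
next
  assume h: "\<exists>x\<in>A. \<exists>y\<in>A. x \<noteq> y \<and> turnout v x y = 0"
  show "\<exists>Y\<subseteq>A. (\<forall>x\<in>A - Y. \<forall>x'\<in>A - Y. x \<noteq> x' \<longrightarrow> turnout v x x' > 0) \<and>
                    (\<forall>y\<in>Y. \<forall>x\<in>A. x \<noteq> y \<longrightarrow> v y x = 0)"
    by (rule part2[OF assms h])
qed

end
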